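(* Let $k\ge1$, $a_1,\dots,a_k>0$, $a=a_1+\dots+a_k$, $Q>0$, $\sigma\ge 1/2$, and real $t_1,\dots,t_k$ with $|t_i|\le X^Q$ be fixed, and let $X$ be large. Let $M,N$ be constants depending only on $(a_1,\dots,a_k)$, with $N$ sufficiently large. With the notation below, $$\sum_{p\in\mathcal S(0)}(\log p)\,\Phi\Big(\frac pX\Big)\ll_{a_1,\dots,a_k} X e^{-(\log\log X)^2}.$$
   Context: $\chi^{(d)}=\left(\frac{d}{\cdot}\right)$ is the Kronecker symbol; $q$ denotes primes. $\Phi$ is a non-negative smooth function with $\Phi\le1$ on $[1/4,1/2]\cup[1,3/2]$, $\Phi=1$ on $[1/2,1]$, $\Phi=0$ otherwise. Put $h(n)=\frac12\Re\big(\sum_{m=1}^k a_m n^{-it_m}\big)$. Let $\beta_0=0$ and, for $j\ge1$, $\beta_j=20^{j-1}/(\log\log X)^2$, $s_j=2\lfloor e^N\beta_j^{-3/4}\rfloor$, $h_j=s_j/100$; let $\mathcal J=1+\max\{j:\beta_j\le 10^{-M}\}$. For $1\le i\le j\le\mathcal J$ and odd prime $p$ define $$a\mathcal G_{i,j}(p)=\sum_{X^{\beta_{i-1}}<q\le X^{\beta_i}}\frac{2h(q)\chi^{(8p)}(q)}{q^{1/2+\max(\sigma-1/2,\,1/\log X^{\beta_j})}}\cdot\frac{\log(X^{\beta_j}/q)}{\log X^{\beta_j}}.$$ $\mathcal S(0)$ is the set of odd primes $p$ such that $|a\mathcal G_{1,l}(p)|>h_1$ for some $1\le l\le\mathcal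 J$. *)

theory Defs
  imports "HOL-Analysis.Analysis" "HOL-Number_Theory.Number_Theory"
begin

definition kronecker_prime :: "int \<Rightarrow> nat \<Rightarrow> int" where
  "kronecker_prime d q =
     (if q = 2 then (if even d then 0 else if d mod 8 = 1 \<or> d mod 8 = 7 then 1 else -1)
      else Legendre d (int q))"

definition hfun :: "nat \<Rightarrow> (nat \<Rightarrow> real) \<Rightarrow> (nat \<Rightarrow> real) \<Rightarrow> nat \<Rightarrow> real" where
  "hfun k a t n = (1/2) * Re (\<Sum>m=1..k. complex_of_real (a m) *
        (of_nat n :: complex) powr (- (\<i> * complex_of_real (t m))))"

definition beta :: "real \<Rightarrow> nat \<Rightarrow> real" where
  "beta X j = (if j = 0 then 0 else 20 ^ (j - 1) / (ln (ln X))\<^sup>2)"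

definition s_idx :: "real \<Rightarrow> real \<Rightarrow> nat \<Rightarrow> int" where
  "s_idx X N j = 2 * \<lfloor>exp N * beta X j powr (-3/4)\<rfloor>"

definition h_idx :: "real \<Rightarrow> real \<Rightarrow> nat \<Rightarrow> real" where
  "h_idx X N j = real_of_int (s_idx X N j) / 100"

definition Jcal :: "real \<Rightarrow> real \<Rightarrow> nat" where
  "Jcal X M = 1 + Max {j. 1 \<le> j \<and> beta X j \<le> 10 powr (-M)}"

definition aG :: "nat \<Rightarrow> (nat \<Rightarrow> real) \<Rightarrow> (nat \<Rightarrow> real) \<Rightarrow> real \<Rightarrow> real \<Rightarrow> nat \<Rightarrow> nat \<Rightarrow> nat \<Rightarrow> real" where
  "aG k a t \<sigma> X i j p =
     (\<Sum>q\<in>{q::nat. prime q \<and> X powr beta X (i - 1) < real q \<and> real q \<le> X powr beta X i}.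
        2 * hfun k a t q * real_of_int (kronecker_prime (8 * int p) q)
          / real q powr (1/2 + max (\<sigma> - 1/2) (1 / ln (X powr beta X j)))
          * (ln (X powr beta X j / real q) / ln (X powr beta X j)))"

definition S0 :: "nat \<Rightarrow> (nat \<Rightarrow> real) \<Rightarrow> (nat \<Rightarrow> real) \<Rightarrow> real \<Rightarrow> real \<Rightarrow> real \<Rightarrow> real \<Rightarrow> nat set" where
  "S0 k a t \<sigma> X M N = {p. prime p \<and> odd p \<and>
      (\<exists>l\<in>{1..Jcal X M}. \<bar>aG k a t \<sigma> X 1 l p\<bar> > h_idx X N 1)}"

definition smooth_fun :: "(real \<Rightarrow> real) \<Rightarrow> bool" where
  "smooth_fun f \<longleftrightarrow> (\<forall>n. ((deriv ^^ n) f) differentiable_on UNIV)"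

end

theory Submission
  imports Defs "HOL-Real_Asymp.Real_Asymp"
begin


lemma Legendre_cong:
  assumes "[a = b] (mod p)"
  shows "Legendre a p = Legendre b p"
proof -
  have "[a = 0] (mod p) \<longleftrightarrow> [b = 0] (mod p)"
    using assms cong_sym cong_trans by blast
  moreover have "QuadRes p a \<longleftrightarrow> QuadRes p b"
    unfolding QuadRes_def using assms cong_sym cong_trans by blast
  ultimately show ?thesis unfolding Legendre_def by simp
qed

lemma Legendre_vals: "Legendre a p \<in> {-1, 0, 1}"
  unfolding Legendre_def by auto

lemma Legendre_abs_le: "\<bar>Legendre a p\<bar> \<le> 1"
  unfolding Legendre_def by auto

lemma Legendre_mult:
  fixes p :: nat
  assumes "prime p" "2 < p"
  shows "Legendre (a * b) (int p) = Legendre a p * Legendre b p"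
proof -
  have "[Legendre (a*b) p = (a*b) ^ ((p - 1) div 2)] (mod p)"
    using euler_criterion assms by blast
  moreover have "[Legendre a p * Legendre b p = a ^ ((p - 1) div 2) * b ^ ((p - 1) div 2)] (mod p)"
    using euler_criterion[OF assms, of a] euler_criterion[OF assms, of b] cong_mult by blast
  ultimately have c: "[Legendre (a*b) p = Legendre a p * Legendre b p] (mod p)"
    by (metis cong_sym cong_trans power_mult_distrib)
  have "Legendre (a*b) p \<in> {-1,0,1}" "Legendre a p * Legendre b p \<in> {-1,0,1}"
    using Legendre_vals[of "a*b" p] Legendre_vals[of a p] Legendre_vals[of b p] by auto
  then have "\<bar>Legendre (a*b) p - Legendre a p * Legendre b p\<bar> < int p"
    using assms(2) by auto
  moreover have "int p dvd (Legendre (a*b) p - Legendre a p * Legendre b p)"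
    using c by (simp add: cong_iff_dvd_diff dvd_diff_commute)
  ultimately show ?thesis
    by (metis abs_of_nat dvd_imp_le_int eq_iff_diff_eq_0 not_le)
qed

lemma nonresidue_exists:
  fixes p :: nat
  assumes "prime p" "2 < p"
  shows "\<exists>g. Legendre g (int p) = -1"
proof (rule ccontr)
  assume H: "\<not> ?thesis"
  define h where "h = (p - 1) div 2"
  have odd: "odd p" using assms prime_odd_nat by blast
  have h2: "2 * h = p - 1" using odd unfolding h_def by presburger
  have sub: "{1..<int p} \<subseteq> (\<lambda>y. y^2 mod int p) ` {1..int h}"
  proof
    fix a assume a: "a \<in> {1..<int p}"
    have amod: "a mod int p = a" using a by simp
    have "\<not> [a = 0] (mod int p)"
      using a unfolding cong_def by simp
    then have "Legendre a p \<noteq> 0" unfolding Legendre_def by simp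
    moreover have "Legendre a p \<noteq> -1" using H by blast
    ultimately have "QuadRes p a" unfolding Legendre_def by (simp split: if_splits)
    then obtain y where y: "[y^2 = a] (mod int p)" unfolding QuadRes_def by blast
    define r where "r = y mod int p"
    have r: "0 \<le> r" "r < int p" using assms unfolding r_def by simp_all
    have "[r = y] (mod int p)" unfolding r_def cong_def by simp
    then have "[r^2 = y^2] (mod int p)" by (rule cong_pow)
    then have ry: "[r^2 = a] (mod int p)" using y by (rule cong_trans)
    then have ry': "r^2 mod int p = a" using amod unfolding cong_def by simp
    have "r \<noteq> 0" using ry' a by auto
    show "a \<in> (\<lambda>y. y^2 mod int p) ` {1..int h}"
    proof (cases "r \<le> int h")
      case True
      then have "r \<in> {1..int h}" using \<open>r \<noteq> 0\<close> r by simp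
      moreover have "a = (\<lambda>y. y^2 mod int p) r" using ry' by simp
      ultimately show ?thesis by (rule rev_image_eqI)
    next
      case False
      have "(int p - r)^2 = r^2 + (int p - 2 * r) * int p"
        by (simp add: power2_eq_square algebra_simps)
      then have "(int p - r)^2 mod int p = r^2 mod int p"
        by simp
      then have e: "(int p - r)^2 mod int p = a" using ry' by simp
      have "int h < r" using False by simp
      then have "int p - r \<in> {1..int h}" using r h2 by simp
      moreover have "a = (\<lambda>y. y^2 mod int p) (int p - r)" using e by simp
      ultimately show ?thesis by (rule rev_image_eqI)
    qed
  qed
  have "card {1..<int p} \<le> card ((\<lambda>y. y^2 mod int p) ` {1..int h})"
    by (rule card_mono[OF _ sub]) simp
  also have "\<dots> \<le> card {1..int h}" by (rule card_image_le) simp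
  finally have "card {1..<int p} \<le> card {1..int h}" .
  then show False using h2 assms by simp
qed


lemma Legendre_sum_zero:
  fixes p :: nat
  assumes "prime p" "2 < p"
  shows "(\<Sum>u\<in>{0..<int p}. Legendre u (int p)) = 0"
proof -
  obtain g where g: "Legendre g (int p) = -1" using nonresidue_exists assms by blast
  have "\<not> [g = 0] (mod int p)" using g unfolding Legendre_def by auto
  then have nd: "\<not> int p dvd g" by (simp add: cong_0_iff)
  have "prime (int p)" using assms(1) by simp
  then have cop: "coprime (int p) g" using nd by (rule prime_imp_coprime)
  have inj: "inj_on (\<lambda>u. g * u mod int p) {0..<int p}"
  proof
    fix u v assume uv: "u \<in> {0..<int p}" "v \<in> {0..<int p}" "g * u mod int p = g * v mod int p"
    then have "[g * u = g * v] (mod int p)" by (simp add: cong_def)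
    then have "[u = v] (mod int p)" using cop by (simp add: cong_mult_lcancel coprime_commute)
    then show "u = v" using uv(1,2) by (simp add: cong_def)
  qed
  have im: "(\<lambda>u. g * u mod int p) ` {0..<int p} = {0..<int p}"
  proof (rule endo_inj_surj)
    show "finite {0..<int p}" by simp
    show "(\<lambda>u. g * u mod int p) ` {0..<int p} \<subseteq> {0..<int p}" using assms by auto
    show "inj_on (\<lambda>u. g * u mod int p) {0..<int p}" by (rule inj)
  qed
  define S where "S = (\<Sum>u\<in>{0..<int p}. Legendre u (int p))"
  have "S = (\<Sum>u\<in>(\<lambda>u. g * u mod int p) ` {0..<int p}. Legendre u (int p))"
    unfolding S_def im ..
  also have "\<dots> = (\<Sum>u\<in>{0..<int p}. Legendre ((g * u) mod int p) (int p))"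
    by (rule sum.reindex[OF inj, unfolded comp_def])
  also have "\<dots> = (\<Sum>u\<in>{0..<int p}. Legendre g (int p) * Legendre u (int p))"
  proof (rule sum.cong[OF refl])
    fix u
    have "Legendre ((g * u) mod int p) (int p) = Legendre (g * u) (int p)"
      by (rule Legendre_cong) (simp add: cong_def)
    also have "\<dots> = Legendre g (int p) * Legendre u (int p)" by (rule Legendre_mult[OF assms])
    finally show "Legendre ((g * u) mod int p) (int p) = Legendre g (int p) * Legendre u (int p)" .
  qed
  also have "\<dots> = - S" unfolding S_def g by (simp add: sum_negf)
  finally show ?thesis unfolding S_def by simp
qed



definition chi :: "nat \<Rightarrow> nat \<Rightarrow> real" where
  "chi q n = real_of_int (Legendre (8 * int n) (int q))"

lemma chi_abs_le: "\<bar>chi q n\<bar> \<le> 1"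
  unfolding chi_def using Legendre_abs_le[of "8 * int n" "int q"] by linarith

lemma chi_vals: "chi q n \<in> {-1, 0, 1}"
  unfolding chi_def using Legendre_vals[of "8 * int n" "int q"] by auto

lemma chi_period:
  assumes "q dvd T"
  shows "chi q (n + T) = chi q n"
proof -
  obtain k where T: "T = q * k" using assms by blast
  have "8 * int (n + T) - 8 * int n = int q * (8 * int k)"
    unfolding T by (simp add: algebra_simps)
  then have "[8 * int (n + T) = 8 * int n] (mod int q)"
    unfolding cong_iff_dvd_diff by (metis dvd_triv_left)
  then show ?thesis unfolding chi_def by (simp add: Legendre_cong)
qed

lemma block_sum:
  fixes f :: "nat \<Rightarrow> real"
  shows "(\<Sum>n<a*b. f n) = (\<Sum>v<b. \<Sum>j<a. f (v + j * b))"
proof -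
  have "(\<Sum>n<a*b. f n) = (\<Sum>j<a. \<Sum>n\<in>{j*b..<j*b+b}. f n)"
    using sum.nat_group[of f b a] by simp
  also have "\<dots> = (\<Sum>j<a. \<Sum>v<b. f (v + j * b))"
  proof (rule sum.cong[OF refl])
    fix j
    show "(\<Sum>n\<in>{j*b..<j*b+b}. f n) = (\<Sum>v<b. f (v + j * b))"
      using sum.shift_bounds_nat_ivl[of f 0 "j*b" b] by (simp add: atLeast0LessThan add.commute)
  qed
  also have "\<dots> = (\<Sum>v<b. \<Sum>j<a. f (v + j * b))" by (rule sum.swap)
  finally show ?thesis .
qed

lemma chi_rotation_sum:
  assumes "prime q" "2 < q" "coprime R q"
  shows "(\<Sum>j<q. chi q (v + j * R)) = 0"
proof -
  have cop8: "coprime (8 * R) q"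
  proof -
    have "odd q" using assms prime_odd_nat by blast
    then have "coprime q (2::nat)" by simp
    then have "coprime q ((2::nat)^3)" by (metis coprime_power_right_iff)
    then have "coprime (8::nat) q" by (simp add: coprime_commute)
    then show ?thesis using assms(3) by simp
  qed
  define g where "g = (\<lambda>j. (8 * (v + j * R)) mod q)"
  have inj: "inj_on g {..<q}"
  proof
    fix i j assume ij: "i \<in> {..<q}" "j \<in> {..<q}" "g i = g j"
    then have "[8 * v + (8 * R) * i = 8 * v + (8*R) * j] (mod q)"
      unfolding g_def cong_def by (simp add: algebra_simps)
    then have "[(8 * R) * i = (8*R) * j] (mod q)" by (simp add: cong_add_lcancel_nat)
    then have "[i = j] (mod q)" using cop8 by (simp add: cong_mult_lcancel_nat coprime_commute)
    then show "i = j" using ij(1,2) by (simp add: cong_def)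
  qed
  have qpos: "0 < q" using assms by simp
  have im: "g ` {..<q} = {..<q}"
  proof (rule endo_inj_surj)
    show "finite {..<q}" by simp
    show "g ` {..<q} \<subseteq> {..<q}" using qpos unfolding g_def by auto
    show "inj_on g {..<q}" by (rule inj)
  qed
  have "(\<Sum>j<q. chi q (v + j * R)) = (\<Sum>j<q. real_of_int (Legendre (int (g j)) (int q)))"
  proof (rule sum.cong[OF refl])
    fix j
    have "[8 * int (v + j * R) = int (g j)] (mod int q)"
      unfolding g_def cong_def by (simp add: of_nat_mod)
    then show "chi q (v + j * R) = real_of_int (Legendre (int (g j)) (int q))"
      unfolding chi_def by (simp add: Legendre_cong)
  qed
  also have "\<dots> = (\<Sum>u\<in>g ` {..<q}. real_of_int (Legendre (int u) (int q)))"
    by (rule sum.reindex[OF inj, unfolded comp_def, symmetric])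
  also have "\<dots> = (\<Sum>u<q. real_of_int (Legendre (int u) (int q)))" unfolding im ..
  also have "\<dots> = real_of_int (\<Sum>u<q. Legendre (int u) (int q))" by simp
  also have "(\<Sum>u<q. Legendre (int u) (int q)) = (\<Sum>u\<in>int ` {..<q}. Legendre u (int q))"
    by (rule sum.reindex[OF inj_on_of_nat, unfolded comp_def, symmetric])
  also have "int ` {..<q} = {0..<int q}"
    by (simp add: lessThan_atLeast0 image_int_atLeastLessThan)
  also have "(\<Sum>u\<in>{0..<int q}. Legendre u (int q)) = 0"
    by (rule Legendre_sum_zero[OF assms(1,2)])
  finally show ?thesis by simp
qed

lemma periodic_sum_bound:
  fixes f :: "nat \<Rightarrow> real"
  assumes T: "0 < T" and per: "\<And>n. f (n + T) = f n" and z: "(\<Sum>n<T. f n) = 0"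
    and b: "\<And>n. \<bar>f n\<bar> \<le> 1"
  shows "\<bar>\<Sum>n<Z. f n\<bar> \<le> real T"
proof -
  have perk: "f (n + k * T) = f n" for n k
    by (induction k) (simp_all add: add.assoc[symmetric] per add.commute[of T])
  have full: "(\<Sum>n<k * T. f n) = 0" for k
  proof (induction k)
    case 0 then show ?case by simp
  next
    case (Suc k)
    have "{..<Suc k * T} = {..<k*T} \<union> {k*T..<k*T+T}" by auto
    then have "(\<Sum>n<Suc k * T. f n) = (\<Sum>n<k*T. f n) + (\<Sum>n\<in>{k*T..<k*T+T}. f n)"
      by (simp add: sum.union_disjoint ivl_disj_int)
    also have "(\<Sum>n\<in>{k*T..<k*T+T}. f n) = (\<Sum>n<T. f (n + k * T))"
      using sum.shift_bounds_nat_ivl[of f 0 "k*T" T] by (simp add: atLeast0LessThan add.commute)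
    also have "\<dots> = 0" using z by (simp add: perk)
    finally show ?case using Suc by simp
  qed
  define k r where "k = Z div T" and "r = Z mod T"
  have Z: "Z = k * T + r" unfolding k_def r_def by simp
  have r: "r < T" unfolding r_def using T by simp
  have "{..<Z} = {..<k*T} \<union> {k*T..<k*T+r}" unfolding Z by auto
  then have "(\<Sum>n<Z. f n) = (\<Sum>n<k*T. f n) + (\<Sum>n\<in>{k*T..<k*T+r}. f n)"
    by (simp add: sum.union_disjoint ivl_disj_int)
  also have "(\<Sum>n\<in>{k*T..<k*T+r}. f n) = (\<Sum>n<r. f (n + k * T))"
    using sum.shift_bounds_nat_ivl[of f 0 "k*T" r] by (simp add: atLeast0LessThan add.commute)
  also have "\<dots> = (\<Sum>n<r. f n)" by (simp add: perk)
  finally have e: "(\<Sum>n<Z. f n) = (\<Sum>n<r. f n)" using full by simp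
  have "\<bar>\<Sum>n<r. f n\<bar> \<le> (\<Sum>n<r. \<bar>f n\<bar>)" by (rule sum_abs)
  also have "\<dots> \<le> (\<Sum>n<r. 1)" by (rule sum_mono) (rule b)
  also have "\<dots> = real r" by simp
  finally show ?thesis using e r by simp
qed



definition Gp :: "nat list \<Rightarrow> nat \<Rightarrow> real" where
  "Gp xs n = prod_list (map (\<lambda>q. chi q n) xs)"

lemma prod_list_split:
  fixes f :: "'a \<Rightarrow> 'b::comm_monoid_mult"
  shows "prod_list (map f xs) = f x ^ count_list xs x * prod_list (map f (filter (\<lambda>y. y \<noteq> x) xs))"
  by (induction xs) (auto simp: algebra_simps)

lemma chi_odd_pow: "odd k \<Longrightarrow> chi q n ^ k = chi q n"
  using chi_vals[of q n] odd_pos[of k] by (auto simp: power_0_left)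

lemma Gp_abs_le: "\<bar>Gp xs n\<bar> \<le> 1"
proof (induction xs)
  case Nil then show ?case by (simp add: Gp_def)
next
  case (Cons x xs)
  have "\<bar>Gp (x # xs) n\<bar> = \<bar>chi x n\<bar> * \<bar>Gp xs n\<bar>" by (simp add: Gp_def abs_mult)
  also have "\<dots> \<le> 1 * 1"
    using Cons chi_abs_le[of x n] by (intro mult_mono) auto
  finally show ?case by simp
qed

lemma Gp_period:
  assumes "\<And>q. q \<in> set xs \<Longrightarrow> q dvd T"
  shows "Gp xs (n + T) = Gp xs n"
  unfolding Gp_def using assms
  by (induction xs) (auto simp: chi_period)

lemma Gp_nondiag_bound:
  assumes pr: "\<And>q. q \<in> set xs \<Longrightarrow> prime q \<and> 2 < q" and od: "odd (count_list xs q0)"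
  shows "\<bar>\<Sum>n<Z. Gp xs n\<bar> \<le> real (prod_list xs)"
proof -
  have q0in: "q0 \<in> set xs" using od by (metis count_notin even_zero)
  have q0: "prime q0" "2 < q0" using pr[OF q0in] by auto
  define ys where "ys = filter (\<lambda>y. y \<noteq> q0) xs"
  define R where "R = prod_list ys"
  have ysin: "q \<in> set ys \<Longrightarrow> q \<in> set xs \<and> q \<noteq> q0" for q unfolding ys_def by auto
  have copR: "coprime R q0" unfolding R_def
  proof (rule prod_list_coprime_left)
    fix x assume "x \<in> set ys"
    then have "prime x" "x \<noteq> q0" using ysin pr by auto
    then show "coprime x q0" using q0(1) primes_coprime by blast
  qed
  have "0 \<notin> set ys" using ysin pr by (metis not_prime_0)
  then have Rpos: "0 < R" unfolding R_def by (metis prod_list_zero_iff gr0I)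
  define T where "T = q0 * R"
  have Tpos: "0 < T" unfolding T_def using Rpos q0 by simp
  have dvdT: "q dvd T" if "q \<in> set xs" for q
  proof (cases "q = q0")
    case True then show ?thesis unfolding T_def by simp
  next
    case False
    then have "q \<in> set ys" unfolding ys_def using that by simp
    then have "q dvd R" unfolding R_def by (rule prod_list_dvd)
    then show ?thesis unfolding T_def by simp
  qed
  have split: "Gp xs n = chi q0 n * Gp ys n" for n
    unfolding Gp_def ys_def using prod_list_split[of "\<lambda>q. chi q n" xs q0] chi_odd_pow[OF od] by simp
  have full: "(\<Sum>n<T. Gp xs n) = 0"
  proof -
    have "(\<Sum>n<T. Gp xs n) = (\<Sum>n<q0*R. chi q0 n * Gp ys n)" unfolding T_def split ..
    also have "\<dots> = (\<Sum>v<R. \<Sum>j<q0. chi q0 (v + j * R) * Gp ys (v + j * R))"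
      by (rule block_sum)
    also have "\<dots> = (\<Sum>v<R. Gp ys v * (\<Sum>j<q0. chi q0 (v + j * R)))"
    proof (rule sum.cong[OF refl])
      fix v
      have "Gp ys (v + j * R) = Gp ys v" for j
        by (rule Gp_period) (simp add: R_def prod_list_dvd)
      then show "(\<Sum>j<q0. chi q0 (v + j * R) * Gp ys (v + j * R)) = Gp ys v * (\<Sum>j<q0. chi q0 (v + j * R))"
        by (simp add: sum_distrib_left mult.commute)
    qed
    also have "\<dots> = 0" using chi_rotation_sum[OF q0 copR] by simp
    finally show ?thesis .
  qed
  have "\<bar>\<Sum>n<Z. Gp xs n\<bar> \<le> real T"
    by (rule periodic_sum_bound[OF Tpos _ full Gp_abs_le]) (rule Gp_period, rule dvdT)
  also have "T \<le> prod_list xs"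
  proof -
    have "prod_list xs = q0 ^ count_list xs q0 * R"
      unfolding R_def ys_def using prod_list_split[of "\<lambda>q. q" xs q0] by simp
    moreover have "q0 \<le> q0 ^ count_list xs q0"
      using self_le_power[of q0 "count_list xs q0"] odd_pos[OF od] q0 by simp
    ultimately show ?thesis unfolding T_def using Rpos by simp
  qed
  finally show ?thesis by simp
qed



definition lists_len :: "'a set \<Rightarrow> nat \<Rightarrow> 'a list set" where
  "lists_len P k = {xs. set xs \<subseteq> P \<and> length xs = k}"

lemma finite_lists_len: "finite P \<Longrightarrow> finite (lists_len P k)"
  unfolding lists_len_def by (rule finite_lists_length_eq)

lemma lists_len_0: "lists_len P 0 = {[]}"
  unfolding lists_len_def by auto

lemma lists_len_Suc: "lists_len P (Suc k) = (\<lambda>(x, xs). x # xs) ` (P \<times> lists_len P k)"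
  unfolding lists_len_def by (auto simp: length_Suc_conv)

lemma lists_len_Suc_inj: "inj_on (\<lambda>(x, xs). x # xs) A"
  by (auto simp: inj_on_def)

lemma power_expand:
  fixes f :: "'a \<Rightarrow> real"
  assumes "finite P"
  shows "(\<Sum>q\<in>P. f q) ^ k = (\<Sum>xs\<in>lists_len P k. prod_list (map f xs))"
proof (induction k)
  case 0 then show ?case by (simp add: lists_len_0)
next
  case (Suc k)
  have "(\<Sum>xs\<in>lists_len P (Suc k). prod_list (map f xs))
      = (\<Sum>p\<in>P \<times> lists_len P k. prod_list (map f ((\<lambda>(x, xs). x # xs) p)))"
    unfolding lists_len_Suc by (rule sum.reindex[OF lists_len_Suc_inj, unfolded comp_def])
  also have "\<dots> = (\<Sum>p\<in>P \<times> lists_len P k. f (fst p) * prod_list (map f (snd p)))"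
    by (intro sum.cong refl) auto
  also have "\<dots> = (\<Sum>x\<in>P. \<Sum>xs\<in>lists_len P k. f x * prod_list (map f xs))"
    by (rule sum.cartesian_product[symmetric, unfolded split_def])
  also have "\<dots> = (\<Sum>q\<in>P. f q) * (\<Sum>xs\<in>lists_len P k. prod_list (map f xs))"
    by (simp add: sum_product)
  finally show ?case using Suc by simp
qed

definition diag :: "'a list \<Rightarrow> bool" where
  "diag xs \<longleftrightarrow> (\<forall>q. even (count_list xs q))"

definition Dsum :: "'a set \<Rightarrow> ('a \<Rightarrow> real) \<Rightarrow> nat \<Rightarrow> real" where
  "Dsum P w k = (\<Sum>xs\<in>{xs\<in>lists_len P k. diag xs}. prod_list (map w xs))"

definition ins_at :: "nat \<Rightarrow> 'a \<Rightarrow> 'a list \<Rightarrow> 'a list" where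
  "ins_at j x ws = take j ws @ x # drop j ws"

lemma prod_ins_at: "prod_list (map w (ins_at j x ws)) = (w x :: real) * prod_list (map w ws)"
proof -
  have "prod_list (map w ws) = prod_list (map w (take j ws)) * prod_list (map w (drop j ws))"
    by (metis append_take_drop_id map_append prod_list.append)
  then show ?thesis unfolding ins_at_def by simp
qed

lemma prod_list_nonneg_map: "(\<And>x. 0 \<le> w x) \<Longrightarrow> 0 \<le> prod_list (map w xs :: real list)"
  by (induction xs) auto

lemma Dsum_step:
  fixes P :: "'a set"
  assumes fin: "finite P" and w: "\<And>x. 0 \<le> w x"
  shows "Dsum P w (Suc (Suc k)) \<le> real (Suc k) * (\<Sum>x\<in>P. w x ^ 2) * Dsum P w k"
proof -
  define A where "A = {xs\<in>lists_len P (Suc (Suc k)). diag xs}"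
  define B where "B = P \<times> {..k} \<times> {xs\<in>lists_len P k. diag xs}"
  define g :: "'a \<times> nat \<times> 'a list \<Rightarrow> 'a list" where "g = (\<lambda>(x, j, ws). x # ins_at j x ws)"
  have "finite {xs\<in>lists_len P k. diag xs}" using finite_lists_len[OF fin, of k] by simp
  then have finB: "finite B" unfolding B_def using fin by simp
  have sub: "A \<subseteq> g ` B"
  proof
    fix zs assume "zs \<in> A"
    then have zs: "set zs \<subseteq> P" "length zs = Suc (Suc k)" "diag zs"
      unfolding A_def lists_len_def by auto
    then obtain x xs where zx: "zs = x # xs" by (metis length_Suc_conv)
    have "even (count_list zs x)" using zs(3) unfolding diag_def by blast
    then have "odd (count_list xs x)" using zx by simp
    then have "x \<in> set xs" by (metis count_notin even_zero)
    then obtain ys ts where xs: "xs = ys @ x # ts" by (metis split_list)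
    define ws where "ws = ys @ ts"
    define j where "j = length ys"
    have ins: "ins_at j x ws = xs" unfolding ins_at_def ws_def j_def xs by simp
    have lw: "length ws = k" using zs(2) zx xs unfolding ws_def by simp
    have jk: "j \<le> k" using lw unfolding j_def ws_def by simp
    have sw: "set ws \<subseteq> P" using zs(1) zx xs unfolding ws_def by auto
    have dw: "diag ws"
      unfolding diag_def
    proof
      fix q
      have "even (count_list zs q)" using zs(3) unfolding diag_def by blast
      moreover have "count_list zs q = count_list ws q + (if q = x then 2 else 0)"
        unfolding zx xs ws_def by simp
      ultimately show "even (count_list ws q)" by (simp split: if_splits)
    qed
    have "x \<in> P" using zs(1) zx by simp
    then have "(x, j, ws) \<in> B" unfolding B_def lists_len_def using jk sw lw dw by simp
    moreover have "zs = g (x, j, ws)" unfolding g_def using ins zx by simp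
    ultimately show "zs \<in> g ` B" by blast
  qed
  have "Dsum P w (Suc (Suc k)) = (\<Sum>zs\<in>A. prod_list (map w zs))" unfolding Dsum_def A_def ..
  also have "\<dots> \<le> (\<Sum>zs\<in>g ` B. prod_list (map w zs))"
    by (rule sum_mono2) (use finB sub w prod_list_nonneg_map in auto)
  also have "\<dots> \<le> (\<Sum>b\<in>B. prod_list (map w (g b)))"
    using sum_image_le[OF finB, of "\<lambda>zs. prod_list (map w zs)" g] prod_list_nonneg_map[of w] w
    by (simp add: comp_def)
  also have "\<dots> = (\<Sum>b\<in>B. w (fst b) ^ 2 * prod_list (map w (snd (snd b))))"
    by (intro sum.cong refl) (auto simp: g_def prod_ins_at power2_eq_square)
  also have "\<dots> = (\<Sum>x\<in>P. \<Sum>j\<in>{..k}. \<Sum>ws\<in>{xs\<in>lists_len P k. diag xs}. w x ^ 2 * prod_list (map w ws))"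
    unfolding B_def sum.cartesian_product' by simp
  also have "\<dots> = (\<Sum>x\<in>P. w x ^ 2 * (real (Suc k) * Dsum P w k))"
    by (simp add: Dsum_def sum_distrib_left mult_ac)
  also have "\<dots> = (\<Sum>x\<in>P. w x ^ 2) * real (Suc k) * Dsum P w k"
    by (simp add: sum_distrib_left[symmetric] sum_distrib_right mult_ac)
  finally show ?thesis by (simp add: mult_ac)
qed

lemma Dsum_0: "Dsum P w 0 = 1"
proof -
  have "{xs\<in>{[]}. diag xs} = {[]::'a list}" by (auto simp: diag_def)
  then show ?thesis unfolding Dsum_def lists_len_0 by simp
qed

lemma Dsum_bound:
  assumes fin: "finite P" and w: "\<And>x. 0 \<le> w x"
  shows "Dsum P w (2 * m) \<le> (real (2 * m) * (\<Sum>x\<in>P. w x ^ 2)) ^ m"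
proof (induction m)
  case 0 then show ?case by (simp add: Dsum_0)
next
  case (Suc m)
  define S where "S = (\<Sum>x\<in>P. w x ^ 2)"
  have S: "0 \<le> S" unfolding S_def by (simp add: sum_nonneg)
  have "Dsum P w (2 * Suc m) = Dsum P w (Suc (Suc (2 * m)))" by simp
  also have "\<dots> \<le> real (Suc (2*m)) * S * Dsum P w (2 * m)"
    unfolding S_def by (rule Dsum_step[OF fin w])
  also have "\<dots> \<le> real (Suc (2*m)) * S * (real (2 * m) * S) ^ m"
    using Suc S by (intro mult_left_mono) (auto simp: S_def)
  also have "\<dots> \<le> (real (2 * Suc m) * S) * (real (2 * Suc m) * S) ^ m"
    using S by (intro mult_mono power_mono mult_right_mono) auto
  also have "\<dots> = (real (2 * Suc m) * S) ^ Suc m" by simp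
  finally show ?case unfolding S_def .
qed



lemma abs_prod_list_map: "\<bar>prod_list (map c xs)\<bar> = prod_list (map (\<lambda>q. \<bar>c q\<bar>) xs :: real list)"
  by (induction xs) (auto simp: abs_mult)

lemma prod_list_le_pow:
  assumes "\<And>q. q \<in> set xs \<Longrightarrow> q \<le> Y"
  shows "prod_list xs \<le> (Y::nat) ^ length xs"
  using assms by (induction xs) (auto intro: mult_le_mono)

lemma prod_list_map_mult: "prod_list (map (\<lambda>q. c q * d q) xs) = prod_list (map c xs) * (prod_list (map d xs) :: real)"
  by (induction xs) auto

lemma moment_bound:
  fixes c :: "nat \<Rightarrow> real" and P :: "nat set" and Y :: nat
  assumes fin: "finite P" and Pp: "\<And>q. q \<in> P \<Longrightarrow> prime q \<and> 2 < q \<and> q \<le> Y"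
  shows "(\<Sum>n<Z. (\<Sum>q\<in>P. c q * chi q n) ^ (2*m))
     \<le> real Z * (real (2*m) * (\<Sum>q\<in>P. (c q)^2)) ^ m + real Y ^ (2*m) * (\<Sum>q\<in>P. \<bar>c q\<bar>) ^ (2*m)"
proof -
  define k where "k = 2 * m"
  define L where "L = lists_len P k"
  define Ld where "Ld = {xs\<in>L. diag xs}"
  define Ln where "Ln = {xs\<in>L. \<not> diag xs}"
  have finL: "finite L" unfolding L_def using finite_lists_len[OF fin] .
  have LdLn: "L = Ld \<union> Ln" "Ld \<inter> Ln = {}" unfolding Ld_def Ln_def by auto
  have finLd: "finite Ld" "finite Ln" using finL unfolding Ld_def Ln_def by auto
  define a where "a = (\<lambda>xs. \<bar>prod_list (map c xs)\<bar>)"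
  define s where "s = (\<lambda>xs. \<bar>\<Sum>n<Z. Gp xs n\<bar>)"
  have a0: "0 \<le> a xs" for xs unfolding a_def by simp
  have expand: "(\<Sum>q\<in>P. c q * chi q n) ^ k = (\<Sum>xs\<in>L. prod_list (map c xs) * Gp xs n)" for n
  proof -
    have "(\<Sum>q\<in>P. c q * chi q n) ^ k = (\<Sum>xs\<in>L. prod_list (map (\<lambda>q. c q * chi q n) xs))"
      unfolding L_def by (rule power_expand[OF fin])
    also have "\<dots> = (\<Sum>xs\<in>L. prod_list (map c xs) * Gp xs n)"
      by (intro sum.cong refl) (simp add: Gp_def prod_list_map_mult)
    finally show ?thesis .
  qed
  have "(\<Sum>n<Z. (\<Sum>q\<in>P. c q * chi q n) ^ k) = (\<Sum>n<Z. \<Sum>xs\<in>L. prod_list (map c xs) * Gp xs n)"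
    by (simp add: expand)
  also have "\<dots> = (\<Sum>xs\<in>L. prod_list (map c xs) * (\<Sum>n<Z. Gp xs n))"
    by (subst sum.swap) (simp add: sum_distrib_left)
  also have "\<dots> \<le> (\<Sum>xs\<in>L. a xs * s xs)"
  proof (rule sum_mono)
    fix xs
    have "prod_list (map c xs) * (\<Sum>n<Z. Gp xs n) \<le> \<bar>prod_list (map c xs) * (\<Sum>n<Z. Gp xs n)\<bar>"
      by (rule abs_ge_self)
    then show "prod_list (map c xs) * (\<Sum>n<Z. Gp xs n) \<le> a xs * s xs"
      unfolding a_def s_def by (simp add: abs_mult)
  qed
  also have "\<dots> = (\<Sum>xs\<in>Ld. a xs * s xs) + (\<Sum>xs\<in>Ln. a xs * s xs)"
    unfolding LdLn(1) by (rule sum.union_disjoint[OF finLd LdLn(2)])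
  also have "(\<Sum>xs\<in>Ld. a xs * s xs) \<le> (\<Sum>xs\<in>Ld. a xs * real Z)"
  proof (rule sum_mono)
    fix xs
    have "s xs \<le> (\<Sum>n<Z. \<bar>Gp xs n\<bar>)" unfolding s_def by (rule sum_abs)
    also have "\<dots> \<le> (\<Sum>n<Z. 1)" by (rule sum_mono) (rule Gp_abs_le)
    finally have "s xs \<le> real Z" by simp
    then show "a xs * s xs \<le> a xs * real Z" by (rule mult_left_mono) (rule a0)
  qed
  also have "(\<Sum>xs\<in>Ld. a xs * real Z) = real Z * Dsum P (\<lambda>q. \<bar>c q\<bar>) k"
    unfolding Dsum_def Ld_def L_def a_def by (simp add: abs_prod_list_map sum_distrib_left mult.commute)
  also have "Dsum P (\<lambda>q. \<bar>c q\<bar>) k \<le> (real (2*m) * (\<Sum>q\<in>P. (c q)^2)) ^ m"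
    unfolding k_def using Dsum_bound[OF fin, of "\<lambda>q. \<bar>c q\<bar>" m] by simp
  also have "(\<Sum>xs\<in>Ln. a xs * s xs) \<le> (\<Sum>xs\<in>Ln. a xs * real Y ^ k)"
  proof (rule sum_mono)
    fix xs assume "xs \<in> Ln"
    then have xs: "set xs \<subseteq> P" "length xs = k" "\<not> diag xs"
      unfolding Ln_def L_def lists_len_def by auto
    then obtain q0 where q0: "odd (count_list xs q0)" unfolding diag_def by blast
    have "s xs \<le> real (prod_list xs)" unfolding s_def
      by (rule Gp_nondiag_bound[OF _ q0]) (use xs Pp in blast)
    also have "prod_list xs \<le> Y ^ k"
      using prod_list_le_pow[of xs Y] xs Pp by auto
    then have "real (prod_list xs) \<le> real Y ^ k" by (metis of_nat_le_iff of_nat_power)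
    finally show "a xs * s xs \<le> a xs * real Y ^ k" by (rule mult_left_mono) (rule a0)
  qed
  also have "(\<Sum>xs\<in>Ln. a xs * real Y ^ k) \<le> (\<Sum>xs\<in>L. a xs * real Y ^ k)"
    by (rule sum_mono2[OF finL]) (auto simp: Ln_def a0)
  also have "\<dots> = real Y ^ k * (\<Sum>q\<in>P. \<bar>c q\<bar>) ^ k"
    unfolding L_def a_def power_expand[OF fin]
    by (simp add: abs_prod_list_map sum_distrib_left mult.commute)
  finally show ?thesis unfolding k_def by (simp add: mult_left_mono)
qed

lemma markov_count:
  fixes f :: "nat \<Rightarrow> real"
  assumes h: "0 < h"
  shows "real (card {n\<in>{..<Z}. h < \<bar>f n\<bar>}) * h ^ (2*m) \<le> (\<Sum>n<Z. f n ^ (2*m))"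
proof -
  define A where "A = {n\<in>{..<Z}. h < \<bar>f n\<bar>}"
  have "real (card A) * h ^ (2*m) = (\<Sum>n\<in>A. h ^ (2*m))" by simp
  also have "\<dots> \<le> (\<Sum>n\<in>A. f n ^ (2*m))"
  proof (rule sum_mono)
    fix n assume "n \<in> A"
    then have "h \<le> \<bar>f n\<bar>" unfolding A_def by simp
    then have "h ^ (2*m) \<le> \<bar>f n\<bar> ^ (2*m)" using h by (intro power_mono) auto
    also have "\<bar>f n\<bar> ^ (2*m) = f n ^ (2*m)" by (simp add: power_mult power2_abs)
    finally show "h ^ (2*m) \<le> f n ^ (2*m)" .
  qed
  also have "\<dots> \<le> (\<Sum>n<Z. f n ^ (2*m))"
    by (rule sum_mono2) (auto simp: A_def power_mult)
  finally show ?thesis unfolding A_def .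
qed



definition primes_upto :: "nat \<Rightarrow> nat set" where
  "primes_upto n = {p. prime p \<and> p \<le> n}"

lemma finite_primes_upto [simp]: "finite (primes_upto n)"
  unfolding primes_upto_def by simp

lemma prod_primes_dvd:
  fixes S :: "nat set"
  assumes "finite S" "\<And>p. p \<in> S \<Longrightarrow> prime p \<and> p dvd n"
  shows "\<Prod>S dvd n"
  using assms
proof (induction S rule: finite_induct)
  case empty then show ?case by simp
next
  case (insert p S)
  have cop: "coprime p (\<Prod>S)"
  proof (rule prod_coprime_right)
    fix q assume "q \<in> S"
    then have "prime q" "q \<noteq> p" using insert by auto
    then show "coprime p q" using insert(4)[of p] primes_coprime by auto
  qed
  have "p dvd n" "\<Prod>S dvd n" using insert by auto
  then have "p * \<Prod>S dvd n" using cop by (rule divides_mult)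
  then show ?case using insert by simp
qed

lemma prod_subset_le_nat:
  fixes A B :: "nat set"
  assumes "finite B" "A \<subseteq> B" "\<And>b. b \<in> B \<Longrightarrow> 0 < b"
  shows "\<Prod>A \<le> \<Prod>B"
proof -
  have "\<Prod>B = \<Prod>(B - A) * \<Prod>A" using prod.subset_diff[OF assms(2,1)] by simp
  moreover have "0 < \<Prod>(B - A)" using assms by (simp add: prod_pos)
  ultimately show ?thesis by simp
qed

lemma central_binom_bound: "(2*k+1) choose k \<le> 4 ^ k"
proof -
  have sym: "(2*k+1) choose k = (2*k+1) choose (k+1)"
    using binomial_symmetric[of k "2*k+1"] by simp
  have "((2*k+1) choose k) + ((2*k+1) choose (k+1)) = (\<Sum>i\<in>{k, k+1}. (2*k+1) choose i)" by simp
  also have "\<dots> \<le> (\<Sum>i\<le>2*k+1. (2*k+1) choose i)"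
    by (rule sum_mono2) auto
  also have "\<dots> = 2 ^ (2*k+1)" by (rule choose_row_sum)
  also have "\<dots> = 2 * 4 ^ k" by (simp add: power_mult)
  finally show ?thesis using sym by simp
qed

lemma primorial_bound: "\<Prod>(primes_upto n) \<le> 4 ^ n"
proof (induction n rule: less_induct)
  case (less n)
  show ?case
  proof (cases "n \<le> 2")
    case True
    then have "n = 0 \<or> n = 1 \<or> n = 2" by auto
    moreover have "primes_upto 0 = {}" "primes_upto 1 = {}" "primes_upto 2 = {2}"
      unfolding primes_upto_def by (auto simp: prime_ge_2_nat dest: prime_ge_2_nat)
    ultimately show ?thesis by auto
  next
    case False
    show ?thesis
    proof (cases "even n")
      case True
      have np: "\<not> prime n" using True False prime_odd_nat[of n] by auto
      have le: "p \<le> n \<longleftrightarrow> p \<le> n - 1 \<or> p = n" for p using False by auto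
      have "primes_upto n = primes_upto (n - 1)"
        unfolding primes_upto_def le using np by auto
      then have "\<Prod>(primes_upto n) \<le> 4 ^ (n - 1)" using less[of "n - 1"] False by simp
      also have "\<dots> \<le> 4 ^ n" by (rule power_increasing) auto
      finally show ?thesis .
    next
      case odd: False
      then obtain k where n: "n = 2*k+1" by (metis oddE)
      have k1: "1 \<le> k" using False n by simp
      define B where "B = {p. prime p \<and> k+1 < p \<and> p \<le> 2*k+1}"
      have finB: "finite B" unfolding B_def by simp
      have un: "primes_upto n = primes_upto (k+1) \<union> B" "primes_upto (k+1) \<inter> B = {}"
        unfolding primes_upto_def B_def n by auto
      have "\<Prod>(primes_upto n) = \<Prod>(primes_upto (k+1)) * \<Prod>B"
        unfolding un(1) by (rule prod.union_disjoint[OF finite_primes_upto finB un(2)])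
      also have "\<Prod>B dvd ((2*k+1) choose k)"
      proof (rule prod_primes_dvd[OF finB])
        fix p assume "p \<in> B"
        then have p: "prime p" "k+1 < p" "p \<le> 2*k+1" unfolding B_def by auto
        have "fact k * fact (2*k+1-k) * ((2*k+1) choose k) = (fact (2*k+1) :: nat)"
          by (rule binomial_fact_lemma) simp
        then have e: "fact k * fact (k+1) * ((2*k+1) choose k) = (fact (2*k+1) :: nat)"
          by (simp add: Suc_diff_le)
        have "p dvd fact (2*k+1)" using p prime_dvd_fact_iff by blast
        then have "p dvd fact k * fact (k+1) * ((2*k+1) choose k)" using e by simp
        moreover have "\<not> p dvd fact k"
        proof
          assume "p dvd fact k" then have "p \<le> k" using prime_dvd_fact_iff[OF p(1)] by blast
          with p(2) show False by simp
        qed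
        moreover have "\<not> p dvd fact (k+1)"
        proof
          assume "p dvd fact (k+1)" then have "p \<le> k+1" using prime_dvd_fact_iff[OF p(1)] by blast
          with p(2) show False by simp
        qed
        ultimately have "p dvd ((2*k+1) choose k)" using p(1) by (simp add: prime_dvd_mult_iff)
        then show "prime p \<and> p dvd ((2*k+1) choose k)" using p by simp
      qed
      then have "\<Prod>B \<le> (2*k+1) choose k"
        by (rule dvd_imp_le) (simp add: zero_less_binomial)
      then have "\<Prod>B \<le> 4 ^ k" using central_binom_bound[of k] by simp
      then have "\<Prod>(primes_upto (k+1)) * \<Prod>B \<le> 4 ^ (k+1) * 4 ^ k"
        using less[of "k+1"] n k1 by (intro mult_mono) auto
      also have "(4::nat) ^ (k+1) * 4 ^ k = 4 ^ n" unfolding n by (simp add: power_add[symmetric])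
      finally show ?thesis .
    qed
  qed
qed



definition pblock :: "nat \<Rightarrow> nat set" where
  "pblock i = {p. prime p \<and> 2^i < p \<and> p \<le> 2^(i+1)}"

lemma finite_pblock [simp]: "finite (pblock i)"
  unfolding pblock_def by simp

lemma pblock_card: "i * card (pblock i) \<le> 2 ^ (i+2)"
proof -
  have "(2::nat) ^ (i * card (pblock i)) = (\<Prod>p\<in>pblock i. 2 ^ i)" by (simp add: power_mult)
  also have "\<dots> \<le> \<Prod>(pblock i)"
    by (rule prod_mono) (auto simp: pblock_def)
  also have "\<dots> \<le> \<Prod>(primes_upto (2^(i+1)))"
    by (rule prod_subset_le_nat) (auto simp: pblock_def primes_upto_def prime_gt_0_nat)
  also have "\<dots> \<le> 4 ^ (2^(i+1))" by (rule primorial_bound)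
  also have "(4::nat) ^ (2^(i+1)) = 2 ^ (2^(i+2))"
  proof -
    have "(4::nat) ^ (2^(i+1)) = (2^2) ^ (2^(i+1))" by simp
    also have "\<dots> = 2 ^ (2 * 2^(i+1))" by (simp only: power_mult)
    also have "2 * 2^(i+1) = (2::nat)^(i+2)" by simp
    finally show ?thesis .
  qed
  finally show ?thesis by (rule power_le_imp_le_exp[rotated]) simp
qed

lemma pblock_recip: "1 \<le> i \<Longrightarrow> (\<Sum>p\<in>pblock i. 1 / real p) \<le> 4 / real i"
proof -
  assume i: "1 \<le> i"
  have "(\<Sum>p\<in>pblock i. 1 / real p) \<le> (\<Sum>p\<in>pblock i. 1 / 2 ^ i)"
  proof (rule sum_mono)
    fix p assume "p \<in> pblock i"
    then have "2^i < p" unfolding pblock_def by simp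
    then have "(2::real)^i \<le> real p" by (metis less_imp_le of_nat_le_iff of_nat_numeral of_nat_power)
    moreover have "(0::real) < 2^i" by simp
    ultimately have pp: "0 < real p" by linarith
    show "1 / real p \<le> 1 / 2 ^ i" using \<open>(2::real)^i \<le> real p\<close> pp
      by (intro divide_left_mono) auto
  qed
  also have "\<dots> = real (card (pblock i)) / 2 ^ i" by simp
  also have "\<dots> \<le> (2 ^ (i+2) / real i) / 2 ^ i"
  proof (intro divide_right_mono)
    have "real i * real (card (pblock i)) \<le> 2 ^ (i+2)"
      using pblock_card[of i] by (metis of_nat_le_iff of_nat_mult of_nat_numeral of_nat_power)
    then show "real (card (pblock i)) \<le> 2 ^ (i+2) / real i" using i by (simp add: field_simps)
  qed simp
  also have "\<dots> = 4 / real i" by (simp add: power_add)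
  finally show ?thesis .
qed

definition Srec :: "nat \<Rightarrow> real" where
  "Srec r = (\<Sum>p\<in>primes_upto (2^r). 1 / real p)"

lemma Srec_Suc: "Srec (Suc r) = Srec r + (\<Sum>p\<in>pblock r. 1 / real p)"
proof -
  have un: "primes_upto (2^Suc r) = primes_upto (2^r) \<union> pblock r" "primes_upto (2^r) \<inter> pblock r = {}"
    unfolding primes_upto_def pblock_def by auto
  show ?thesis unfolding Srec_def un(1) by (rule sum.union_disjoint) (use un(2) in auto)
qed

lemma Srec_bound: "Srec (Suc r) \<le> 4 * harm r + 1/2"
proof (induction r)
  case 0
  have "primes_upto 2 = {2}" unfolding primes_upto_def by (auto dest: prime_ge_2_nat)
  then show ?case by (simp add: Srec_def harm_nonneg)
next
  case (Suc r)
  have "Srec (Suc (Suc r)) = Srec (Suc r) + (\<Sum>p\<in>pblock (Suc r). 1 / real p)" by (rule Srec_Suc)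
  also have "\<dots> \<le> 4 * harm r + 1/2 + 4 / real (Suc r)"
    using Suc pblock_recip[of "Suc r"] by simp
  also have "\<dots> = 4 * harm (Suc r) + 1/2" by (simp add: harm_Suc field_simps)
  finally show ?case .
qed

lemma harm_le_ln: "1 \<le> n \<Longrightarrow> harm n \<le> ln (real n) + (1::real)"
  using euler_mascheroni_sequence_decreasing[of 1 n] by (simp add: harm_def)

lemma mertens_weak:
  fixes x :: real
  assumes x: "2 \<le> x"
  shows "(\<Sum>p\<in>{p. prime p \<and> real p \<le> x}. 1 / real p) \<le> 4 * ln (ln x / ln 2 + 1) + 5"
proof -
  define r where "r = nat \<lceil>ln x / ln 2\<rceil>"
  have lx: "1 \<le> ln x / ln 2" using x by (simp add: ln_mono field_simps)
  have r1: "1 \<le> r" unfolding r_def using lx by linarith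
  have rle: "real r \<le> ln x / ln 2 + 1" unfolding r_def using lx by linarith
  have rge: "ln x / ln 2 \<le> real r" unfolding r_def by linarith
  have "x = 2 powr (ln x / ln 2)" using x by (simp add: powr_def)
  also have "\<dots> \<le> 2 powr (real r)" using rge by (intro powr_mono) auto
  also have "\<dots> = 2 ^ r" by (simp add: powr_realpow)
  finally have x2: "x \<le> 2 ^ r" .
  have sub: "{p. prime p \<and> real p \<le> x} \<subseteq> primes_upto (2^r)"
  proof
    fix p assume "p \<in> {p. prime p \<and> real p \<le> x}"
    then have pr: "prime p" and px: "real p \<le> x" by auto
    have "real p \<le> 2 ^ r" using px x2 by linarith
    then have "p \<le> 2^r" by simp
    then show "p \<in> primes_upto (2^r)" unfolding primes_upto_def using pr by simp
  qed
  have "(\<Sum>p\<in>{p. prime p \<and> real p \<le> x}. 1 / real p) \<le> Srec r"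
    unfolding Srec_def by (rule sum_mono2[OF finite_primes_upto sub]) simp
  also obtain r' where r': "r = Suc r'" using r1 by (metis Suc_pred' less_le_trans zero_less_one)
  then have "Srec r \<le> 4 * harm r' + 1/2" using Srec_bound by simp
  also have "harm r' \<le> (harm r :: real)" using r' by (intro harm_mono) simp
  also have "harm r \<le> ln (real r) + 1" using r1 by (rule harm_le_ln)
  also have "ln (real r) \<le> ln (ln x / ln 2 + 1)" using rle r1 by (intro ln_mono) auto
  finally show ?thesis by simp
qed



lemma hfun_bound:
  assumes a: "\<forall>m\<in>{1..k}. 0 \<le> a m"
  shows "\<bar>hfun k a t n\<bar> \<le> (\<Sum>m=1..k. a m) / 2"
proof -
  define z where "z = (\<Sum>m=1..k. complex_of_real (a m) * (of_nat n :: complex) powr (- (\<i> * complex_of_real (t m))))"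
  have "cmod z \<le> (\<Sum>m=1..k. cmod (complex_of_real (a m) * (of_nat n :: complex) powr (- (\<i> * complex_of_real (t m)))))"
    unfolding z_def by (rule norm_sum)
  also have "\<dots> \<le> (\<Sum>m=1..k. a m)"
  proof (rule sum_mono)
    fix m assume m: "m \<in> {1..k}"
    have "cmod ((of_nat n :: complex) powr (- (\<i> * complex_of_real (t m)))) = real n powr 0"
      by (subst norm_powr_real_powr) auto
    also have "\<dots> \<le> 1" by (simp add: powr_def)
    finally have "cmod ((of_nat n :: complex) powr (- (\<i> * complex_of_real (t m)))) \<le> 1" .
    then show "cmod (complex_of_real (a m) * (of_nat n :: complex) powr (- (\<i> * complex_of_real (t m)))) \<le> a m"
      using a m by (simp add: norm_mult mult_left_le)
  qed
  finally have "cmod z \<le> (\<Sum>m=1..k. a m)" .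
  moreover have "\<bar>hfun k a t n\<bar> = \<bar>Re z\<bar> / 2" unfolding hfun_def z_def by simp
  moreover have "\<bar>Re z\<bar> \<le> cmod z" by (rule abs_Re_le_cmod)
  ultimately show ?thesis by simp
qed

lemma coef_bound:
  fixes X b1 bl \<sigma> H A :: real and q :: nat
  assumes X: "1 < X" and b1: "0 < b1" and b1l: "b1 \<le> bl" and q2: "2 \<le> q"
    and qY: "real q \<le> X powr b1" and H: "\<bar>H\<bar> \<le> A / 2"
  shows "\<bar>2 * H / real q powr (1/2 + max (\<sigma> - 1/2) (1 / ln (X powr bl))) * (ln (X powr bl / real q) / ln (X powr bl))\<bar>
          \<le> A / sqrt (real q)"
proof -
  define E where "E = X powr bl"
  have lE: "0 < ln E" unfolding E_def using X b1 b1l by simp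
  have Epos: "0 < E" unfolding E_def using X by simp
  have E1: "1 < E" using lE Epos ln_gt_zero_iff by blast
  have qE: "real q \<le> E" unfolding E_def using qY X b1l by (meson order_trans powr_mono less_imp_le)
  have qpos: "0 < real q" using q2 by simp
  define w where "w = ln (E / real q) / ln E"
  have w0: "0 \<le> w" unfolding w_def using qE qpos lE by (simp add: ln_ge_zero_iff field_simps)
  have w1: "w \<le> 1" unfolding w_def using qpos lE q2 E1
    by (simp add: ln_div divide_le_eq_1_pos)
  define d where "d = max (\<sigma> - 1/2) (1 / ln E)"
  have "0 \<le> 1 / ln E" using lE by simp
  then have d0: "0 \<le> d" unfolding d_def by (rule order_trans[OF _ max.cobounded2])
  have "sqrt (real q) = real q powr (1/2)" using qpos by (simp add: powr_half_sqrt)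
  also have "\<dots> \<le> real q powr (1/2 + d)" using q2 d0 by (intro powr_mono) auto
  finally have sq: "sqrt (real q) \<le> real q powr (1/2 + d)" .
  have sqp: "0 < sqrt (real q)" using qpos by simp
  have "\<bar>2 * H / real q powr (1/2 + d) * w\<bar> = 2 * \<bar>H\<bar> / real q powr (1/2 + d) * w"
    using w0 by (simp add: abs_mult)
  also have "\<dots> \<le> 2 * \<bar>H\<bar> / real q powr (1/2 + d) * 1"
    using w1 by (intro mult_left_mono) auto
  also have "\<dots> \<le> 2 * \<bar>H\<bar> / sqrt (real q)"
    using sq sqp by (simp add: divide_left_mono)
  also have "\<dots> \<le> A / sqrt (real q)"
    using H sqp by (simp add: divide_right_mono)
  finally show ?thesis unfolding d_def w_def E_def .
qed


definition cl :: "nat \<Rightarrow> (nat \<Rightarrow> real) \<Rightarrow> (nat \<Rightarrow> real) \<Rightarrow> real \<Rightarrow> real \<Rightarrow> nat \<Rightarrow> nat \<Rightarrow> real" where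
  "cl k a t \<sigma> X l q = 2 * hfun k a t q / real q powr (1/2 + max (\<sigma> - 1/2) (1 / ln (X powr beta X l)))
      * (ln (X powr beta X l / real q) / ln (X powr beta X l))"

lemma le_nat_ceiling: "real q \<le> Y \<Longrightarrow> q \<le> nat \<lceil>Y\<rceil>"
proof -
  assume "real q \<le> Y"
  then have "\<lceil>real q\<rceil> \<le> \<lceil>Y\<rceil>" by (rule ceiling_mono)
  then have "int q \<le> \<lceil>Y\<rceil>" by simp
  then have "nat (int q) \<le> nat \<lceil>Y\<rceil>" by (rule nat_mono)
  then show ?thesis by simp
qed

lemma finite_real_le: "finite {q::nat. P q \<and> real q \<le> Y}"
proof (rule finite_subset)
  show "{q::nat. P q \<and> real q \<le> Y} \<subseteq> {..nat \<lceil>Y\<rceil>}"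
    by (auto intro: le_nat_ceiling)
qed simp

lemma kron_2: "kronecker_prime (8 * int p) 2 = 0"
  unfolding kronecker_prime_def by simp

lemma aG_as_sum:
  assumes X: "0 < X"
  shows "aG k a t \<sigma> X 1 l p = (\<Sum>q\<in>{q. prime q \<and> 2 < q \<and> real q \<le> X powr beta X 1}. cl k a t \<sigma> X l q * chi q p)"
proof -
  define Y where "Y = X powr beta X 1"
  define Pf where "Pf = {q::nat. prime q \<and> X powr beta X (1 - 1) < real q \<and> real q \<le> Y}"
  define P where "P = {q::nat. prime q \<and> 2 < q \<and> real q \<le> Y}"
  have b0: "X powr beta X (1 - 1) = 1" using X by (simp add: beta_def)
  have finPf: "finite Pf" unfolding Pf_def using finite_real_le[of "\<lambda>q. prime q \<and> X powr beta X (1 - 1) < real q" Y]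
    by (simp add: conj_assoc)
  have PPf: "P \<subseteq> Pf" unfolding P_def Pf_def b0 by auto
  have tm: "2 * hfun k a t q * real_of_int (kronecker_prime (8 * int p) q)
          / real q powr (1/2 + max (\<sigma> - 1/2) (1 / ln (X powr beta X l)))
          * (ln (X powr beta X l / real q) / ln (X powr beta X l))
        = (if q = 2 then 0 else cl k a t \<sigma> X l q * chi q p)" for q
  proof (cases "q = 2")
    case True then show ?thesis by (simp add: kron_2)
  next
    case False
    then have "real_of_int (kronecker_prime (8 * int p) q) = chi q p"
      unfolding kronecker_prime_def chi_def by simp
    then show ?thesis using False unfolding cl_def by (simp add: field_simps)
  qed
  have "aG k a t \<sigma> X 1 l p = (\<Sum>q\<in>Pf. (if q = 2 then 0 else cl k a t \<sigma> X l q * chi q p))"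
    unfolding aG_def Pf_def Y_def tm ..
  also have "\<dots> = (\<Sum>q\<in>P. (if q = 2 then 0 else cl k a t \<sigma> X l q * chi q p))"
  proof (rule sum.mono_neutral_right[OF finPf PPf])
    show "\<forall>q\<in>Pf - P. (if q = 2 then 0 else cl k a t \<sigma> X l q * chi q p) = 0"
    proof
      fix q assume "q \<in> Pf - P"
      then have "prime q" "\<not> 2 < q" unfolding Pf_def P_def by auto
      then have "q = 2" using prime_ge_2_nat[of q] by simp
      then show "(if q = 2 then 0 else cl k a t \<sigma> X l q * chi q p) = 0" by simp
    qed
  qed
  also have "\<dots> = (\<Sum>q\<in>P. cl k a t \<sigma> X l q * chi q p)"
    by (rule sum.cong) (auto simp: P_def)
  finally show ?thesis unfolding P_def Y_def .
qed

lemma Jcal_bound: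
  fixes X M :: real
  assumes Lp: "0 < ln (ln X)" and small: "1 / (ln (ln X))^2 \<le> 10 powr (-M)"
  shows "real (Jcal X M) \<le> 2 + 10 powr (-M) * (ln (ln X))^2"
proof -
  define Lv where "Lv = ln (ln X)"
  define D where "D = 10 powr (-M)"
  define S where "S = {j. 1 \<le> j \<and> beta X j \<le> 10 powr (-M)}"
  have L2: "0 < Lv^2" using Lp unfolding Lv_def by simp
  have bnd: "real j \<le> 1 + D * Lv^2" if "j \<in> S" for j
  proof -
    have j: "1 \<le> j" "20 ^ (j - 1) / Lv^2 \<le> D" using that unfolding S_def beta_def Lv_def D_def by auto
    then have "20 ^ (j - 1) \<le> D * Lv^2" using L2 by (simp add: divide_le_eq)
    moreover have "real (j - 1) \<le> 20 ^ (j - 1)"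
    proof -
      have "j - 1 < 2 ^ (j - 1)" by (rule less_exp)
      also have "(2::nat) ^ (j - 1) \<le> 20 ^ (j - 1)" by (rule power_mono) auto
      finally have "j - 1 < 20 ^ (j - 1)" .
      then have "real (j - 1) < real (20 ^ (j - 1))" by (simp only: of_nat_less_iff)
      then show ?thesis by simp
    qed
    ultimately show ?thesis using j(1) by (simp add: of_nat_diff)
  qed
  have fin: "finite S"
  proof (rule finite_subset)
    show "S \<subseteq> {..nat \<lceil>1 + D * Lv^2\<rceil>}"
      using bnd by (auto intro: le_nat_ceiling)
  qed simp
  have "1 \<in> S" unfolding S_def beta_def using small by (simp add: Lv_def)
  then have "S \<noteq> {}" by blast
  then have "Max S \<in> S" using fin by (rule Max_in[rotated])
  then have "real (Max S) \<le> 1 + D * Lv^2" by (rule bnd)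
  then show ?thesis unfolding Jcal_def S_def D_def Lv_def by simp
qed



lemma beta_1: "0 < ln (ln X) \<Longrightarrow> beta X 1 = 1 / (ln (ln X))^2"
  unfolding beta_def by simp

lemma beta_mono1: "1 \<le> l \<Longrightarrow> beta X 1 \<le> beta X l"
  unfolding beta_def by (auto intro!: divide_right_mono)

lemma powr_34: "0 < (L::real) \<Longrightarrow> (1 / L^2) powr (-3/4) = L powr (3/2)"
proof -
  assume L: "0 < L"
  have "ln (1 / L^2) = - 2 * ln L" using L by (simp add: ln_div ln_realpow)
  then show ?thesis using L by (simp add: powr_def)
qed

lemma h_lower:
  fixes X N :: real
  assumes L: "100 \<le> ln (ln X)" and N: "0 \<le> N"
  shows "1 \<le> h_idx X N 1" "exp (2*N) * (ln (ln X))^3 / 10^4 \<le> (h_idx X N 1)^2"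
proof -
  define Lv where "Lv = ln (ln X)"
  have Lp: "0 < Lv" using L unfolding Lv_def by simp
  define y where "y = exp N * beta X 1 powr (-3/4)"
  have y: "y = exp N * Lv powr (3/2)" unfolding y_def beta_1[OF Lp[unfolded Lv_def]] Lv_def[symmetric]
    using powr_34[OF Lp] by simp
  have "Lv = Lv powr 1" using Lp by simp
  also have "\<dots> \<le> Lv powr (3/2)" using L unfolding Lv_def by (intro powr_mono) auto
  finally have Lpw: "Lv \<le> Lv powr (3/2)" .
  have "1 \<le> exp N" using N by simp
  then have "Lv powr (3/2) \<le> y" unfolding y using Lp by (simp add: mult_le_cancel_right1)
  then have y100: "100 \<le> y" using Lpw L unfolding Lv_def by linarith
  have fl: "y / 2 \<le> real_of_int \<lfloor>y\<rfloor>" using y100 by linarith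
  have h: "h_idx X N 1 = 2 * real_of_int \<lfloor>y\<rfloor> / 100" unfolding h_idx_def s_idx_def y_def by simp
  have hy: "y / 100 \<le> h_idx X N 1" unfolding h using fl by simp
  then show "1 \<le> h_idx X N 1" using y100 by simp
  have "(y / 100)^2 \<le> (h_idx X N 1)^2" using hy y100 by (intro power_mono) auto
  moreover have "(y / 100)^2 = exp (2*N) * Lv^3 / 10^4"
  proof -
    have "(Lv powr (3/2))^2 = Lv powr (3/2) * Lv powr (3/2)" by (simp add: power2_eq_square)
    also have "\<dots> = Lv powr 3" by (simp add: powr_add[symmetric])
    also have "\<dots> = Lv ^ 3" using Lp by (simp add: powr_numeral)
    finally have "(Lv powr (3/2))^2 = Lv ^ 3" .
    moreover have "(exp N)^2 = exp (2*N)" by (simp add: exp_double[symmetric] mult.commute)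
    ultimately show ?thesis unfolding y by (simp add: power_mult_distrib power_divide)
  qed
  ultimately show "exp (2*N) * (ln (ln X))^3 / 10^4 \<le> (h_idx X N 1)^2" unfolding Lv_def by simp
qed


lemma le_nat_floor: "real q \<le> Y \<Longrightarrow> q \<le> nat \<lfloor>Y\<rfloor>"
proof -
  assume "real q \<le> Y"
  then have "\<lfloor>real q\<rfloor> \<le> \<lfloor>Y\<rfloor>" by (rule floor_mono)
  then have "int q \<le> \<lfloor>Y\<rfloor>" by simp
  then have "nat (int q) \<le> nat \<lfloor>Y\<rfloor>" by (rule nat_mono)
  then show ?thesis by simp
qed

lemma per_l_count:
  fixes k :: nat and a t :: "nat \<Rightarrow> real" and \<sigma> X M N :: real and l :: nat
  defines "Lv \<equiv> ln (ln X)" and "A \<equiv> (\<Sum>m=1..k. a m)"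
  assumes a0: "\<forall>m\<in>{1..k}. 0 \<le> a m" and X3: "3 \<le> X" and L100: "100 \<le> Lv"
    and mert: "4 * ln (ln X / ln 2 + 1) + 5 \<le> 10 * Lv"
    and N0: "0 \<le> N" and NA: "25000 * A^2 / exp (2*N) \<le> exp (-24)"
    and l: "1 \<le> l"
  shows "real (card {n\<in>{..<nat \<lfloor>3*X/2\<rfloor> + 1}. h_idx X N 1 < \<bar>aG k a t \<sigma> X 1 l n\<bar>})
           \<le> 2*X*exp 24*exp(-3*Lv^2) + exp (Lv^2 * ln (max 1 A) / 4) * sqrt X"
proof -
  have Lp: "0 < Lv" using L100 by simp
  have A0: "0 \<le> A" unfolding A_def using a0 by (intro sum_nonneg) auto
  define b1 where "b1 = beta X 1"
  have b1: "b1 = 1 / Lv^2" unfolding b1_def Lv_def by (rule beta_1) (use Lp Lv_def in simp)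
  have b1p: "0 < b1" unfolding b1 using Lp by simp
  have b1le: "b1 \<le> 1" unfolding b1 using L100 by (simp add: divide_le_eq_1)
  define Y where "Y = X powr b1"
  have Ypos: "0 < Y" unfolding Y_def using X3 by simp
  have YX: "Y \<le> X"
  proof -
    have "Y \<le> X powr 1" unfolding Y_def using X3 b1le by (intro powr_mono) auto
    then show ?thesis using X3 by simp
  qed
  define Yn where "Yn = nat \<lfloor>Y\<rfloor>"
  have YnY: "real Yn \<le> Y" unfolding Yn_def using Ypos by simp
  define P where "P = {q::nat. prime q \<and> 2 < q \<and> real q \<le> Y}"
  have finP: "finite P" unfolding P_def using finite_real_le[of "\<lambda>q. prime q \<and> 2 < q" Y]
    by (simp add: conj_assoc)
  have Pp: "prime q \<and> 2 < q \<and> q \<le> Yn" if "q \<in> P" for q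
    using that le_nat_floor[of q Y] unfolding P_def Yn_def by auto
  define c where "c = cl k a t \<sigma> X l"
  have cb: "\<bar>c q\<bar> \<le> A / sqrt (real q)" if "q \<in> P" for q
  proof -
    have q: "2 \<le> q" "real q \<le> X powr beta X 1" using that unfolding P_def Y_def b1_def by auto
    have H: "\<bar>hfun k a t q\<bar> \<le> A / 2" unfolding A_def by (rule hfun_bound[OF a0])
    show ?thesis unfolding c_def cl_def
      by (rule coef_bound[OF _ b1p[unfolded b1_def] beta_mono1[OF l] q H]) (use X3 in simp)
  qed
  have cb1: "\<bar>c q\<bar> \<le> A" if "q \<in> P" for q
  proof -
    have "1 \<le> sqrt (real q)" using Pp[OF that] by simp
    then have "A / sqrt (real q) \<le> A" using A0 by (simp add: divide_le_eq mult_le_cancel_left1)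
    then show ?thesis using cb[OF that] by simp
  qed
  define S where "S = (\<Sum>q\<in>P. (c q)^2)"
  define T where "T = (\<Sum>q\<in>P. \<bar>c q\<bar>)"
  have S0: "0 \<le> S" unfolding S_def by (simp add: sum_nonneg)
  have T0: "0 \<le> T" unfolding T_def by (simp add: sum_nonneg)
  have sub: "P \<subseteq> {p. prime p \<and> real p \<le> X}" unfolding P_def using YX by auto
  have Sb: "S \<le> A^2 * (10 * Lv)"
  proof -
    have "S \<le> (\<Sum>q\<in>P. A^2 * (1 / real q))"
      unfolding S_def
    proof (rule sum_mono)
      fix q assume qP: "q \<in> P"
      have qp: "0 < real q" using Pp[OF qP] by simp
      have "(c q)^2 = \<bar>c q\<bar>^2" by simp
      also have "\<dots> \<le> (A / sqrt (real q))^2" using cb[OF qP] by (intro power_mono) auto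
      also have "\<dots> = A^2 * (1 / real q)" using qp by (simp add: power_divide)
      finally show "(c q)^2 \<le> A^2 * (1 / real q)" .
    qed
    also have "\<dots> = A^2 * (\<Sum>q\<in>P. 1 / real q)" by (simp add: sum_distrib_left)
    also have "(\<Sum>q\<in>P. 1 / real q) \<le> (\<Sum>q\<in>{p. prime p \<and> real p \<le> X}. 1 / real q)"
      using sub by (intro sum_mono2 finite_real_le) auto
    also have "\<dots> \<le> 4 * ln (ln X / ln 2 + 1) + 5" by (rule mertens_weak) (use X3 in simp)
    also have "\<dots> \<le> 10 * Lv" by (rule mert)
    finally show ?thesis by (simp add: mult_left_mono)
  qed
  have Tb: "T \<le> A * real Yn"
  proof -
    have "T \<le> (\<Sum>q\<in>P. A)" unfolding T_def by (rule sum_mono) (rule cb1)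
    also have "\<dots> = real (card P) * A" by simp
    also have "card P \<le> Yn"
    proof -
      have "P \<subseteq> {1..Yn}" by (auto dest: Pp)
      then have "card P \<le> card {1..Yn}" by (intro card_mono) auto
      then show ?thesis by simp
    qed
    then have "real (card P) * A \<le> real Yn * A" using A0 by (intro mult_right_mono) auto
    finally show ?thesis by (simp add: mult.commute)
  qed
  define m where "m = nat \<lfloor>Lv^2 / 8\<rfloor>"
  have fl0: "0 \<le> \<lfloor>Lv^2/8\<rfloor>" by simp
  have mfl: "real m = real_of_int \<lfloor>Lv^2/8\<rfloor>" unfolding m_def using fl0 by simp
  have m_le: "real m \<le> Lv^2 / 8" unfolding mfl by (rule of_int_floor_le)
  have m_ge: "Lv^2 / 8 - 1 \<le> real m" unfolding mfl using real_of_int_floor_gt_diff_one[of "Lv^2/8"] by linarith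
  define h where "h = h_idx X N 1"
  have h1: "1 \<le> h" unfolding h_def using h_lower(1)[OF L100[unfolded Lv_def] N0] .
  have h2: "exp (2*N) * Lv^3 / 10^4 \<le> h^2" unfolding h_def Lv_def using h_lower(2)[OF L100[unfolded Lv_def] N0] .
  define Z where "Z = nat \<lfloor>3*X/2\<rfloor> + 1"
  have Zb: "real Z \<le> 2 * X" unfolding Z_def using X3 by linarith
  define F where "F = (\<lambda>n. \<Sum>q\<in>P. c q * chi q n)"
  have aGF: "aG k a t \<sigma> X 1 l n = F n" for n
    unfolding F_def c_def P_def Y_def b1_def by (rule aG_as_sum) (use X3 in simp)
  define C where "C = card {n\<in>{..<Z}. h < \<bar>F n\<bar>}"
  have hp: "0 < h" using h1 by simp
  have "real C * h ^ (2*m) \<le> (\<Sum>n<Z. F n ^ (2*m))"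
    unfolding C_def by (rule markov_count[OF hp])
  also have "\<dots> \<le> real Z * (real (2*m) * S) ^ m + real Yn ^ (2*m) * T ^ (2*m)"
    unfolding F_def S_def T_def by (rule moment_bound[OF finP Pp])
  finally have mk: "real C * h ^ (2*m) \<le> real Z * (real (2*m) * S) ^ m + real Yn ^ (2*m) * T ^ (2*m)" .
  have hpow: "0 < h ^ (2*m)" using hp by simp
  have hm1: "1 \<le> h ^ (2*m)" using h1 by (rule one_le_power)
  have Cb: "real C \<le> real Z * ((real (2*m) * S) / h^2) ^ m + (real Yn * T) ^ (2*m)"
  proof -
    have "real C \<le> (real Z * (real (2*m) * S) ^ m + real Yn ^ (2*m) * T ^ (2*m)) / h ^ (2*m)"
      using mk hpow by (simp add: le_divide_eq)
    also have "\<dots> = real Z * ((real (2*m) * S) / h^2) ^ m + (real Yn * T) ^ (2*m) / h ^ (2*m)"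
      by (simp add: add_divide_distrib power_divide power_mult power_mult_distrib)
    also have "(real Yn * T) ^ (2*m) / h ^ (2*m) \<le> (real Yn * T) ^ (2*m)"
      using hm1 T0 by (simp add: divide_le_eq mult_le_cancel_left1 zero_le_power)
    finally show ?thesis by simp
  qed
  have ratio: "(real (2*m) * S) / h^2 \<le> exp (-24)"
  proof -
    have "real (2*m) * S \<le> (Lv^2 / 4) * (A^2 * (10 * Lv))"
      using m_le Sb S0 by (intro mult_mono) auto
    also have "\<dots> = 25000 * A^2 / exp (2*N) * (exp (2*N) * Lv^3 / 10^4)"
      by (simp add: field_simps power2_eq_square power3_eq_cube)
    also have "\<dots> \<le> 25000 * A^2 / exp (2*N) * h^2"
      using h2 by (intro mult_left_mono) auto
    finally have "real (2*m) * S \<le> 25000 * A^2 / exp (2*N) * h^2" .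
    then have "real (2*m) * S / h^2 \<le> 25000 * A^2 / exp (2*N)" using hp by (simp add: divide_le_eq)
    then show ?thesis using NA by linarith
  qed
  have P1: "real Z * ((real (2*m) * S) / h^2) ^ m \<le> 2*X*exp 24*exp(-3*Lv^2)"
  proof -
    have "((real (2*m) * S) / h^2) ^ m \<le> exp (-24) ^ m"
      using ratio S0 by (intro power_mono) auto
    also have "\<dots> = exp (- 24 * real m)" by (simp add: exp_of_nat_mult[symmetric] mult.commute)
    also have "\<dots> \<le> exp (24 - 3 * Lv^2)" using m_ge by simp
    also have "\<dots> = exp 24 * exp (-3*Lv^2)" by (simp add: exp_diff exp_minus field_simps)
    finally have r: "((real (2*m) * S) / h^2) ^ m \<le> exp 24 * exp (-3*Lv^2)" .
    have "real Z * ((real (2*m) * S) / h^2) ^ m \<le> (2*X) * (exp 24 * exp (-3*Lv^2))"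
      using Zb r S0 by (intro mult_mono) auto
    then show ?thesis by (simp add: mult_ac)
  qed
  have P2: "(real Yn * T) ^ (2*m) \<le> exp (Lv^2 * ln (max 1 A) / 4) * sqrt X"
  proof -
    define A' where "A' = max 1 A"
    have A'1: "1 \<le> A'" unfolding A'_def by simp
    have "real Yn * T \<le> real Yn * (A * real Yn)" using Tb by (intro mult_left_mono) auto
    also have "\<dots> \<le> A' * Y^2"
    proof -
      have yy: "real Yn * real Yn \<le> Y * Y" using YnY by (intro mult_mono) auto
      have aa: "A \<le> A'" unfolding A'_def by simp
      have "A * (real Yn * real Yn) \<le> A' * (Y * Y)"
        using mult_mono[OF aa yy] A'1 by simp
      then show ?thesis by (simp add: power2_eq_square mult_ac)
    qed
    finally have yt: "real Yn * T \<le> A' * Y^2" .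
    have "(real Yn * T) ^ (2*m) \<le> (A' * Y^2) ^ (2*m)" using yt T0 by (intro power_mono) auto
    also have "\<dots> = A' ^ (2*m) * (Y ^ (4*m))" by (simp add: power_mult_distrib power_mult[symmetric] mult.commute)
    finally have s1: "(real Yn * T) ^ (2*m) \<le> A' ^ (2*m) * (Y ^ (4*m))" .
    have s2: "A' ^ (2*m) \<le> exp (Lv^2 * ln A' / 4)"
    proof -
      have "A' ^ (2*m) = A' powr (real (2*m))" using powr_realpow[of A' "2*m"] A'1 by simp
      also have "\<dots> \<le> A' powr (Lv^2 / 4)" using A'1 m_le by (intro powr_mono) auto
      also have "\<dots> = exp (Lv^2 * ln A' / 4)" using A'1 by (simp add: powr_def mult.commute)
      finally show ?thesis .
    qed
    have s3: "Y ^ (4*m) \<le> sqrt X"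
    proof -
      have e1: "Y powr (real (4*m)) = Y ^ (4*m)" by (rule powr_realpow[OF Ypos])
      have e2: "Y powr (real (4*m)) = X powr (b1 * real (4*m))" unfolding Y_def by (rule powr_powr)
      have "Y ^ (4*m) = X powr (b1 * real (4*m))" using e1 e2 by simp
      also have "\<dots> \<le> X powr (1/2)"
      proof (rule powr_mono)
        have "b1 * real (4*m) = 4 * real m / Lv^2" unfolding b1 by simp
        also have "\<dots> \<le> 4 * (Lv^2/8) / Lv^2" using m_le Lp by (intro divide_right_mono) auto
        also have "\<dots> = 1/2" using Lp by simp
        finally show "b1 * real (4*m) \<le> 1/2" .
      qed (use X3 in simp)
      also have "\<dots> = sqrt X" using X3 by (simp add: powr_half_sqrt)
      finally show ?thesis .
    qed
    have "A' ^ (2*m) * (Y ^ (4*m)) \<le> exp (Lv^2 * ln A' / 4) * sqrt X"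
      using Ypos by (intro mult_mono[OF s2 s3]) auto
    with s1 show ?thesis unfolding A'_def by simp
  qed
  have "{n\<in>{..<Z}. h < \<bar>aG k a t \<sigma> X 1 l n\<bar>} = {n\<in>{..<Z}. h < \<bar>F n\<bar>}" by (simp only: aGF)
  then have "real (card {n\<in>{..<Z}. h < \<bar>aG k a t \<sigma> X 1 l n\<bar>}) = real C" unfolding C_def by simp
  also have "\<dots> \<le> 2*X*exp 24*exp(-3*Lv^2) + exp (Lv^2 * ln (max 1 A) / 4) * sqrt X"
    using Cb P1 P2 by linarith
  finally show ?thesis unfolding Z_def h_def .
qed



lemma main_fixed:
  fixes \<Phi> :: "real \<Rightarrow> real" and k :: nat and a t :: "nat \<Rightarrow> real" and \<sigma> X M N :: real
  defines "Lv \<equiv> ln (ln X)" and "A \<equiv> (\<Sum>m=1..k. a m)" and "D \<equiv> 10 powr (-M)"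
  assumes a0: "\<forall>m\<in>{1..k}. 0 \<le> a m" and X3: "3 \<le> X" and L100: "100 \<le> Lv"
    and small: "1 / Lv^2 \<le> D"
    and mert: "4 * ln (ln X / ln 2 + 1) + 5 \<le> 10 * Lv"
    and N0: "0 \<le> N" and NA: "25000 * A^2 / exp (2*N) \<le> exp (-24)"
    and fin: "ln (2*X) * ((2 + D) * Lv^2) * (2*X*exp 24*exp(-3*Lv^2) + exp (Lv^2 * ln (max 1 A) / 4) * sqrt X)
               \<le> X * exp (- (Lv^2))"
    and \<Phi>0: "\<forall>x. 0 \<le> \<Phi> x" and \<Phi>1: "\<forall>x. \<Phi> x \<le> 1" and \<Phi>z: "\<forall>x. 3/2 < x \<longrightarrow> \<Phi> x = 0"
  shows "(\<Sum>p\<in>{p. p \<in> S0 k a t \<sigma> X M N \<and> real p \<le> 2 * X}. ln (real p) * \<Phi> (real p / X))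
           \<le> X * exp (- (Lv^2))"
proof -
  define Z where "Z = nat \<lfloor>3*X/2\<rfloor> + 1"
  define h where "h = h_idx X N 1"
  define J where "J = Jcal X M"
  define B where "B = 2*X*exp 24*exp(-3*Lv^2) + exp (Lv^2 * ln (max 1 A) / 4) * sqrt X"
  define T where "T = {p. p \<in> S0 k a t \<sigma> X M N \<and> real p \<le> 2 * X}"
  have B0: "0 \<le> B" unfolding B_def using X3 by simp
  have finT: "finite T" unfolding T_def by (rule finite_real_le)
  have Lp: "0 < Lv" using L100 by simp
  have lnpos: "0 \<le> ln (2*X)" using X3 by simp
  have pt: "ln (real p) * \<Phi> (real p / X) \<le> (if p < Z then ln (2*X) else 0)" if pT: "p \<in> T" for p
  proof (cases "p < Z")
    case True
    have p: "prime p" "real p \<le> 2 * X" using pT unfolding T_def S0_def by auto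
    have p2: "2 \<le> p" using p(1) by (rule prime_ge_2_nat)
    have lp0: "0 \<le> ln (real p)" using p2 by simp
    have lp: "ln (real p) \<le> ln (2*X)" using p p2 by simp
    have "ln (real p) * \<Phi> (real p / X) \<le> ln (real p) * 1"
      using \<Phi>1 lp0 by (intro mult_left_mono) auto
    also have "\<dots> \<le> ln (2*X)" using lp by simp
    finally show ?thesis using True by simp
  next
    case False
    then have "real Z \<le> real p" by simp
    moreover have "3*X/2 < real Z" unfolding Z_def using X3 by linarith
    ultimately have "3/2 < real p / X" using X3 by (simp add: field_simps)
    then have "\<Phi> (real p / X) = 0" using \<Phi>z by blast
    then show ?thesis using False by simp
  qed
  have "(\<Sum>p\<in>T. ln (real p) * \<Phi> (real p / X)) \<le> (\<Sum>p\<in>T. (if p < Z then ln (2*X) else 0))"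
    by (rule sum_mono) (rule pt)
  also have "\<dots> = (\<Sum>p\<in>{p\<in>T. p < Z}. ln (2*X))"
    by (rule sum.inter_filter[OF finT, symmetric])
  also have "\<dots> = real (card {p\<in>T. p < Z}) * ln (2*X)" by simp
  also have "real (card {p\<in>T. p < Z}) \<le> real J * B"
  proof -
    define U where "U = (\<lambda>l. {n\<in>{..<Z}. h < \<bar>aG k a t \<sigma> X 1 l n\<bar>})"
    have sub: "{p\<in>T. p < Z} \<subseteq> (\<Union>l\<in>{1..J}. U l)"
    proof
      fix p assume "p \<in> {p\<in>T. p < Z}"
      then have "p \<in> S0 k a t \<sigma> X M N" "p < Z" unfolding T_def by auto
      then obtain l where "l \<in> {1..J}" "h < \<bar>aG k a t \<sigma> X 1 l p\<bar>"
        unfolding S0_def J_def h_def by auto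
      then show "p \<in> (\<Union>l\<in>{1..J}. U l)" unfolding U_def using \<open>p < Z\<close> by auto
    qed
    have "card {p\<in>T. p < Z} \<le> card (\<Union>l\<in>{1..J}. U l)"
      by (rule card_mono[OF _ sub]) (auto simp: U_def)
    also have "\<dots> \<le> (\<Sum>l\<in>{1..J}. card (U l))" by (rule card_UN_le) simp
    finally have "real (card {p\<in>T. p < Z}) \<le> (\<Sum>l\<in>{1..J}. real (card (U l)))"
      by (metis of_nat_le_iff of_nat_sum)
    also have "\<dots> \<le> (\<Sum>l\<in>{1..J}. B)"
    proof (rule sum_mono)
      fix l assume "l \<in> {1..J}"
      then have l: "1 \<le> l" by simp
      show "real (card (U l)) \<le> B"
        unfolding U_def Z_def h_def B_def Lv_def A_def
        by (rule per_l_count[OF a0 X3 L100[unfolded Lv_def] mert[unfolded Lv_def] N0 NA[unfolded A_def] l])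
    qed
    also have "\<dots> = real J * B" by simp
    finally show ?thesis .
  qed
  then have "real (card {p\<in>T. p < Z}) * ln (2*X) \<le> real J * B * ln (2*X)"
    using lnpos by (rule mult_right_mono)
  also have "real J \<le> (2 + D) * Lv^2"
  proof -
    have "real J \<le> 2 + D * Lv^2" unfolding J_def D_def Lv_def
      by (rule Jcal_bound) (use Lp small in \<open>simp_all add: Lv_def D_def\<close>)
    also have "\<dots> \<le> (2 + D) * Lv^2"
    proof -
      have "1 \<le> Lv^2" using L100 by (simp add: one_le_power)
      then show ?thesis by (simp add: algebra_simps)
    qed
    finally show ?thesis .
  qed
  then have "real J * B * ln (2*X) \<le> (2 + D) * Lv^2 * B * ln (2*X)"
    using B0 lnpos by (intro mult_right_mono) auto
  also have "\<dots> = ln (2*X) * ((2 + D) * Lv^2) * B" by (simp add: mult_ac)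
  also have "\<dots> \<le> X * exp (- (Lv^2))" using fin unfolding B_def .
  finally show ?thesis unfolding T_def .
qed

lemma ev_all:
  fixes c K D :: real
  shows "eventually (\<lambda>X::real. 3 \<le> X \<and> 100 \<le> ln (ln X) \<and> D \<le> (ln (ln X))^2 \<and>
      4 * ln (ln X / ln 2 + 1) + 5 \<le> 10 * ln (ln X) \<and>
      ln (2*X) * (K * (ln (ln X))^2) * (2*X * exp 24 * exp (-3 * (ln (ln X))^2) + exp ((ln (ln X))^2 * c / 4) * sqrt X) \<le> X * exp (- ((ln (ln X))^2))) at_top"
proof -
  have e1: "eventually (\<lambda>X::real. 3 \<le> X) at_top" by real_asymp
  have e2: "eventually (\<lambda>X::real. 100 \<le> ln (ln X)) at_top" by real_asymp
  have e3: "eventually (\<lambda>X::real. D \<le> (ln (ln X))^2) at_top" by real_asymp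
  have e4: "eventually (\<lambda>X. 4 * ln (ln X / ln 2 + 1) + 5 \<le> 10 * ln (ln (X::real))) at_top"
    by real_asymp
  have e5: "eventually (\<lambda>X. ln (2*X) * (K * (ln (ln X))^2) * (2*X * exp 24 * exp (-3 * (ln (ln X))^2) + exp ((ln (ln X))^2 * c / 4) * sqrt X) \<le> X * exp (- ((ln (ln X))^2))) at_top"
    by real_asymp
  show ?thesis by (intro eventually_conj e1 e2 e3 e4 e5)
qed

theorem lemma3p1:
  fixes \<Phi> :: "real \<Rightarrow> real"
  assumes smooth: "smooth_fun \<Phi>"
    and nonneg: "\<forall>x. 0 \<le> \<Phi> x"
    and le1: "\<forall>x. (1/4 \<le> x \<and> x \<le> 1/2) \<or> (1 \<le> x \<and> x \<le> 3/2) \<longrightarrow> \<Phi> x \<le> 1"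
    and eq1: "\<forall>x. 1/2 \<le> x \<and> x \<le> 1 \<longrightarrow> \<Phi> x = 1"
    and zero: "\<forall>x. \<not> (1/4 \<le> x \<and> x \<le> 3/2) \<longrightarrow> \<Phi> x = 0"
  shows "\<forall>(k::nat) (a::nat \<Rightarrow> real). k \<ge> 1 \<and> (\<forall>m\<in>{1..k}. a m > 0) \<longrightarrow>
    (\<forall>M::real. \<exists>N0::real. \<forall>N\<ge>N0. \<exists>C::real.
      \<forall>Q::real. \<forall>\<sigma>::real. Q > 0 \<and> \<sigma> \<ge> 1/2 \<longrightarrow>
        (\<exists>X0::real. \<forall>X\<ge>X0. \<forall>t::nat \<Rightarrow> real.
          (\<forall>m\<in>{1..k}. \<bar>t m\<bar> \<le> X powr Q) \<longrightarrow>
          (\<Sum>p\<in>{p. p \<in> S0 k a t \<sigma> X M N \<and> real p \<le> 2 * X}. ln (real p) * \<Phi> (real p / X))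
            \<le> C * X * exp (- (ln (ln X))\<^sup>2)))"
proof (intro allI impI)
  fix k :: nat and a :: "nat \<Rightarrow> real" and M :: real
  assume ka: "k \<ge> 1 \<and> (\<forall>m\<in>{1..k}. a m > 0)"
  have a0: "\<forall>m\<in>{1..k}. 0 \<le> a m" using ka by (simp add: less_imp_le)
  have \<Phi>1: "\<forall>x. \<Phi> x \<le> 1"
  proof
    fix x :: real
    show "\<Phi> x \<le> 1"
    proof (cases "1/4 \<le> x \<and> x \<le> 3/2")
      case True
      then have "(1/4 \<le> x \<and> x \<le> 1/2) \<or> (1/2 \<le> x \<and> x \<le> 1) \<or> (1 \<le> x \<and> x \<le> 3/2)" by linarith
      then show ?thesis using le1 eq1 by (metis order_refl)
    next
      case False then show ?thesis using zero by simp
    qed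
  qed
  have \<Phi>z: "\<forall>x. 3/2 < x \<longrightarrow> \<Phi> x = 0" using zero by force
  define A where "A = (\<Sum>m=1..k. a m)"
  define D where "D = 10 powr (-M)"
  have Dp: "0 < D" unfolding D_def by simp
  define N0 where "N0 = max 1 ((ln (25000 * A^2 + 1) + 24) / 2)"
  show "\<exists>N0::real. \<forall>N\<ge>N0. \<exists>C::real.
      \<forall>Q::real. \<forall>\<sigma>::real. Q > 0 \<and> \<sigma> \<ge> 1/2 \<longrightarrow>
        (\<exists>X0::real. \<forall>X\<ge>X0. \<forall>t::nat \<Rightarrow> real.
          (\<forall>m\<in>{1..k}. \<bar>t m\<bar> \<le> X powr Q) \<longrightarrow>
          (\<Sum>p\<in>{p. p \<in> S0 k a t \<sigma> X M N \<and> real p \<le> 2 * X}. ln (real p) * \<Phi> (real p / X))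
            \<le> C * X * exp (- (ln (ln X))\<^sup>2))"
  proof (rule exI[of _ N0], intro allI impI)
    fix N :: real assume NN: "N0 \<le> N"
    have m1: "1 \<le> N0" and m2: "(ln (25000 * A^2 + 1) + 24) / 2 \<le> N0" unfolding N0_def by simp_all
    have N0': "0 \<le> N" using NN m1 by linarith
    have N2: "ln (25000 * A^2 + 1) \<le> 2*N - 24"
    proof -
      define lA where "lA = ln (25000 * A^2 + 1)"
      have "(lA + 24) / 2 \<le> N0" using m2 unfolding lA_def .
      then have "lA + 24 \<le> 2 * N0" by simp
      moreover have "2 * N0 \<le> 2 * N" using NN by simp
      ultimately have "lA \<le> 2*N - 24" by simp
      then show ?thesis unfolding lA_def .
    qed
    have NA: "25000 * A^2 / exp (2*N) \<le> exp (-24)"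
    proof -
      have "25000 * A^2 \<le> 25000 * A^2 + 1" by simp
      also have "\<dots> = exp (ln (25000 * A^2 + 1))"
      proof -
        have pos: "(0::real) < 25000 * A^2 + 1" by (intro add_nonneg_pos) simp_all
        show ?thesis using exp_ln[OF pos] by simp
      qed
      also have "\<dots> \<le> exp (2*N - 24)" using N2 by simp
      also have "\<dots> = exp (-24) * exp (2*N)" by (simp add: exp_add[symmetric])
      finally show ?thesis by (simp add: divide_le_eq)
    qed
    show "\<exists>C::real. \<forall>Q::real. \<forall>\<sigma>::real. Q > 0 \<and> \<sigma> \<ge> 1/2 \<longrightarrow>
        (\<exists>X0::real. \<forall>X\<ge>X0. \<forall>t::nat \<Rightarrow> real.
          (\<forall>m\<in>{1..k}. \<bar>t m\<bar> \<le> X powr Q) \<longrightarrow>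
          (\<Sum>p\<in>{p. p \<in> S0 k a t \<sigma> X M N \<and> real p \<le> 2 * X}. ln (real p) * \<Phi> (real p / X))
            \<le> C * X * exp (- (ln (ln X))\<^sup>2))"
    proof (rule exI[of _ 1], intro allI impI)
      fix Q \<sigma> :: real
      assume "Q > 0 \<and> \<sigma> \<ge> 1/2"
      obtain X0 where X0: "\<And>X. X0 \<le> X \<Longrightarrow> 3 \<le> X \<and> 100 \<le> ln (ln X) \<and> 1 / D \<le> (ln (ln X))^2 \<and>
        4 * ln (ln X / ln 2 + 1) + 5 \<le> 10 * ln (ln X) \<and>
        ln (2*X) * ((2 + D) * (ln (ln X))^2) * (2*X * exp 24 * exp (-3 * (ln (ln X))^2) + exp ((ln (ln X))^2 * ln (max 1 A) / 4) * sqrt X) \<le> X * exp (- ((ln (ln X))^2))"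
        using ev_all[of "1/D" "2 + D" "ln (max 1 A)"] unfolding eventually_at_top_linorder by blast
      show "\<exists>X0::real. \<forall>X\<ge>X0. \<forall>t::nat \<Rightarrow> real.
          (\<forall>m\<in>{1..k}. \<bar>t m\<bar> \<le> X powr Q) \<longrightarrow>
          (\<Sum>p\<in>{p. p \<in> S0 k a t \<sigma> X M N \<and> real p \<le> 2 * X}. ln (real p) * \<Phi> (real p / X))
            \<le> 1 * X * exp (- (ln (ln X))\<^sup>2)"
      proof (rule exI[of _ X0], intro allI impI)
        fix X :: real and t :: "nat \<Rightarrow> real"
        assume "X0 \<le> X" and "\<forall>m\<in>{1..k}. \<bar>t m\<bar> \<le> X powr Q"
        note H = X0[OF \<open>X0 \<le> X\<close>]
        have "100 \<le> ln (ln X)" using H by blast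
        then have "0 < ln (ln X)" by linarith
        then have Lp: "0 < (ln (ln X))^2" by simp
        have small: "1 / (ln (ln X))^2 \<le> D" using H Lp Dp by (simp add: divide_le_eq mult.commute)
        have "(\<Sum>p\<in>{p. p \<in> S0 k a t \<sigma> X M N \<and> real p \<le> 2 * X}. ln (real p) * \<Phi> (real p / X))
            \<le> X * exp (- ((ln (ln X))^2))"
          by (rule main_fixed[OF a0 _ _ small[unfolded D_def] _ N0' NA[unfolded A_def] _ nonneg \<Phi>1 \<Phi>z])
             (use H in \<open>simp_all add: A_def D_def\<close>)
        then show "(\<Sum>p\<in>{p. p \<in> S0 k a t \<sigma> X M N \<and> real p \<le> 2 * X}. ln (real p) * \<Phi> (real p / X))
            \<le> 1 * X * exp (- (ln (ln X))\<^sup>2)" by simp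
      qed
    qed
  qed
qed

end
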